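(* Let $f\in\mathcal{S}(\mathbb{R})$ and let $(\xi_x)_{x\in\mathbb{Z}}$ be i.i.d. real random variables whose characteristic function $\varphi(t)=\mathbb{E}[e^{2\pi\mathbf{i}t\xi_0}]$ satisfies $1-\varphi(x)\sim c|x|^\alpha$ as $|x|\to0$, with $c>0$ and $\alpha\in(1,2]$. Let $\gamma>1$ and $\beta$ with $1<\beta<\alpha$. Then there exists $C<\infty$ such that for all $r$ with $r^\gamma>2$, $$r^{\frac{\alpha-1}{\alpha}}\,\mathbb{E}\left[\left|\sum_{x\in\mathbb{Z},\,|x|>r^\gamma}f\left(\tfrac{x+\xi_x}{r}\right)\right|\right]\le C\,\frac{r^{(\alpha-1)/\alpha}}{r^{\gamma(\beta-1)}}.$$
   Context: $\mathcal{S}(\mathbb{R})$ is the Schwartz space. *)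

theory Defs
  imports "HOL-Probability.Probability" "HOL-Library.Landau_Symbols"
begin

definition vderiv :: "(real \<Rightarrow> complex) \<Rightarrow> real \<Rightarrow> complex" where
  "vderiv g x = vector_derivative g (at x)"

definition schwartz :: "(real \<Rightarrow> complex) \<Rightarrow> bool" where
  "schwartz f \<longleftrightarrow>
     (\<forall>k x. ((vderiv ^^ k) f) differentiable (at x)) \<and>
     (\<forall>m k. \<exists>B. \<forall>x. \<bar>x\<bar> ^ m * norm (((vderiv ^^ k) f) x) \<le> B)"

end

theory Submission
  imports Defs
begin

lemma norm_infsum_le_nn:
  fixes h :: "'b \<Rightarrow> complex"
  shows "ennreal (norm (infsum h A)) \<le> (\<integral>\<^sup>+x. ennreal (norm (h x)) \<partial>count_space A)"
proof (cases "h summable_on A")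
  case True
  then have "Infinite_Sum.abs_summable_on h A" using summable_on_iff_abs_summable_on_complex by blast
  then have ab: "Infinite_Set_Sum.abs_summable_on h A" using abs_summable_equivalent by blast
  then have "infsum h A = infsetsum h A" using infsetsum_infsum by metis
  also have "\<dots> = integral\<^sup>L (count_space A) h" by (simp add: infsetsum_def)
  finally have eq: "infsum h A = integral\<^sup>L (count_space A) h" .
  have int: "integrable (count_space A) h" using ab by (simp add: abs_summable_on_def)
  have "norm (infsum h A) \<le> integral\<^sup>L (count_space A) (\<lambda>x. norm (h x))"
    unfolding eq by (rule integral_norm_bound)
  also have "ennreal \<dots> = (\<integral>\<^sup>+x. ennreal (norm (h x)) \<partial>count_space A)"
    using int by (subst nn_integral_eq_integral) auto
  finally show ?thesis by (simp add: ennreal_leI)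
next
  case False
  then show ?thesis by (simp add: infsum_not_exists)
qed

lemma tele_ineq:
  fixes n s :: real assumes "n > 1" "s > 1"
  shows "(s - 1) * n powr (-s) \<le> (n - 1) powr (1 - s) - n powr (1 - s)"
proof -
  define h where "h = 1 / n"
  have h: "0 < h" "h < 1" using assms by (auto simp: h_def)
  have "ln (1 - h) \<le> - h" using h ln_le_minus_one[of "1 - h"] by simp
  hence "1 + (s - 1) * h \<le> 1 - (s - 1) * ln (1 - h)" using assms mult_left_mono[of h "- ln (1 - h)" "s - 1"] by simp
  also have "\<dots> \<le> exp (- (s - 1) * ln (1 - h))" using exp_ge_add_one_self[of "- (s - 1) * ln (1 - h)"] by (simp add: algebra_simps)
  also have "\<dots> = (1 - h) powr (1 - s)" using h by (simp add: powr_def)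
  finally have B: "1 + (s - 1) * h \<le> (1 - h) powr (1 - s)" .
  have "n - 1 = n * (1 - h)" using assms by (simp add: h_def field_simps)
  hence "(n - 1) powr (1 - s) = n powr (1 - s) * (1 - h) powr (1 - s)"
    using assms h by (simp add: powr_mult)
  moreover have "n powr (1 - s) * (1 + (s - 1) * h) = n powr (1 - s) + (s - 1) * n powr (-s)"
  proof -
    have "n powr (1 - s) * h = n powr (-s)" using assms
      by (simp add: h_def powr_diff divide_simps powr_minus)
    thus ?thesis by (simp add: algebra_simps)
  qed
  moreover have "n powr (1 - s) * (1 + (s - 1) * h) \<le> n powr (1 - s) * (1 - h) powr (1 - s)"
    using B by (intro mult_left_mono) auto
  ultimately show ?thesis by linarith
qed

lemma tele_sum:
  fixes s :: real assumes "s > 1" "N \<ge> 2"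
  shows "(\<Sum>n\<in>{N..<M}. real n powr (-s)) \<le> real (N - 1) powr (1 - s) / (s - 1)"
proof -
  have X: "(s - 1) * (\<Sum>n\<in>{N..<N + k}. real n powr (-s)) \<le> real (N - 1) powr (1 - s) - real (N + k - 1) powr (1 - s)" for k
  proof (induction k)
    case 0 then show ?case by simp
  next
    case (Suc k)
    have a: "(s - 1) * real (N + k) powr (-s) \<le> (real (N + k) - 1) powr (1 - s) - real (N + k) powr (1 - s)"
      using assms by (intro tele_ineq) auto
    have b: "(real (N + k) - 1) powr (1 - s) = real (N + k - 1) powr (1 - s)"
      using assms by (simp add: of_nat_diff)
    have c: "(\<Sum>n\<in>{N..<N + Suc k}. real n powr (-s)) = (\<Sum>n\<in>{N..<N + k}. real n powr (-s)) + real (N + k) powr (-s)"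
      by simp
    have d: "real (N + Suc k - 1) = real (N + k)" by simp
    show ?case unfolding c d distrib_left using a b Suc.IH by linarith
  qed
  have A: "(s - 1) * (\<Sum>n\<in>{N..<N + k}. real n powr (-s)) \<le> real (N - 1) powr (1 - s)" for k
    using X[of k] powr_ge_zero[of "real (N + k - 1)" "1 - s"] by linarith
  show ?thesis
  proof (cases "M \<le> N")
    case True then show ?thesis using assms by simp
  next
    case False
    then obtain k where "M = N + k" by (metis le_Suc_ex nat_le_linear)
    then show ?thesis using A[of k] assms by (simp add: pos_le_divide_eq mult.commute)
  qed
qed

lemma nat_tail_sum:
  fixes s R :: real assumes s: "s > 1" and R: "R \<ge> 2"
  shows "(\<integral>\<^sup>+n. ennreal (real n powr (-s)) \<partial>count_space {n::nat. real n > R})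
           \<le> ennreal (2 powr (s - 1) / (s - 1) * R powr (1 - s))"
proof -
  define N where "N = nat \<lfloor>R\<rfloor> + 1"
  have N2: "N \<ge> 2" using R by (simp add: N_def le_nat_iff)
  have NR: "real n > R \<longleftrightarrow> N \<le> n" for n
    unfolding N_def using R by (auto simp: floor_less_iff le_floor_iff) linarith+
  have "(\<integral>\<^sup>+n. ennreal (real n powr (-s)) \<partial>count_space {n::nat. real n > R})
      = (\<integral>\<^sup>+n. ennreal (real n powr (-s)) * indicator {n::nat. real n > R} n \<partial>count_space UNIV)"
    by (rule nn_integral_count_space_indicator) (simp add: NO_MATCH_def)
  also have "\<dots> = (\<Sum>n. ennreal (real n powr (-s)) * indicator {n::nat. real n > R} n)"
    by (rule nn_integral_count_space_nat)
  also have "\<dots> \<le> ennreal (real (N - 1) powr (1 - s) / (s - 1))"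
  proof (rule suminf_le_const)
    show "summable (\<lambda>n. ennreal (real n powr (-s)) * indicator {n::nat. real n > R} n)" by simp
    fix M
    have "(\<Sum>n<M. ennreal (real n powr (-s)) * indicator {n::nat. real n > R} n)
        = (\<Sum>n<M. ennreal (if N \<le> n then real n powr (-s) else 0))"
      by (intro sum.cong) (auto simp: NR indicator_def)
    also have "\<dots> = ennreal (\<Sum>n<M. (if N \<le> n then real n powr (-s) else 0))"
      by (rule sum_ennreal) auto
    also have "(\<Sum>n<M. (if N \<le> n then real n powr (-s) else 0)) = (\<Sum>n\<in>{N..<M}. real n powr (-s))"
      by (simp add: sum.If_cases, rule sum.cong) auto
    also have "\<dots> \<le> real (N - 1) powr (1 - s) / (s - 1)"
      using s N2 by (rule tele_sum)
    finally show "(\<Sum>n<M. ennreal (real n powr (-s)) * indicator {n::nat. real n > R} n)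
        \<le> ennreal (real (N - 1) powr (1 - s) / (s - 1))" by (simp add: ennreal_leI)
  qed
  also have "real (N - 1) powr (1 - s) / (s - 1) \<le> 2 powr (s - 1) / (s - 1) * R powr (1 - s)"
  proof -
    have "real (N - 1) = of_int \<lfloor>R\<rfloor>" using R by (simp add: N_def)
    hence ge: "real (N - 1) \<ge> R / 2" using R by linarith
    have "real (N - 1) powr (1 - s) \<le> (R / 2) powr (1 - s)"
      using ge R s by (intro powr_mono2') auto
    also have "(R / 2) powr (1 - s) = 2 powr (s - 1) * R powr (1 - s)"
      using R by (simp add: powr_divide powr_diff powr_minus divide_simps)
    finally show ?thesis using s by (simp add: divide_right_mono)
  qed
  hence "ennreal (real (N - 1) powr (1 - s) / (s - 1)) \<le> ennreal (2 powr (s - 1) / (s - 1) * R powr (1 - s))"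
    by (rule ennreal_leI)
  finally show ?thesis .
qed


lemma int_tail_sum:
  fixes s R :: real assumes s: "s > 1" and R: "R \<ge> 2"
  shows "(\<integral>\<^sup>+x. ennreal (\<bar>real_of_int x\<bar> powr (-s)) \<partial>count_space {x::int. \<bar>real_of_int x\<bar> > R})
           \<le> ennreal (2 * (2 powr (s - 1) / (s - 1) * R powr (1 - s)))"
proof -
  define P where "P = {n::nat. real n > R}"
  define h where "h x = ennreal (\<bar>real_of_int x\<bar> powr (-s))" for x :: int
  define B where "B = 2 powr (s - 1) / (s - 1) * R powr (1 - s)"
  have B0: "B \<ge> 0" using s by (simp add: B_def)
  have part: "(\<integral>\<^sup>+x. h x * indicator (g ` P) x \<partial>count_space UNIV) \<le> ennreal B"
    if inj: "inj g" and hg: "\<And>n. h (g n) = ennreal (real n powr (-s))" for g :: "nat \<Rightarrow> int"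
  proof -
    have "(\<integral>\<^sup>+x. h x * indicator (g ` P) x \<partial>count_space UNIV) = (\<integral>\<^sup>+x. h x \<partial>count_space (g ` P))"
      by (rule nn_integral_count_space_indicator[symmetric]) (simp add: NO_MATCH_def)
    also have "\<dots> = (\<integral>\<^sup>+n. h (g n) \<partial>count_space P)"
      by (rule nn_integral_bij_count_space[symmetric]) (use inj in \<open>auto simp: bij_betw_def inj_on_def\<close>)
    also have "\<dots> = (\<integral>\<^sup>+n. ennreal (real n powr (-s)) \<partial>count_space P)" by (simp add: hg)
    also have "\<dots> \<le> ennreal B" unfolding P_def B_def by (rule nat_tail_sum[OF s R])
    finally show ?thesis .
  qed
  have "(\<integral>\<^sup>+x. h x \<partial>count_space {x::int. \<bar>real_of_int x\<bar> > R})
      = (\<integral>\<^sup>+x. h x * indicator {x::int. \<bar>real_of_int x\<bar> > R} x \<partial>count_space UNIV)"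
    by (rule nn_integral_count_space_indicator) (simp add: NO_MATCH_def)
  also have "\<dots> \<le> (\<integral>\<^sup>+x. h x * indicator (int ` P) x + h x * indicator ((\<lambda>n. - int n) ` P) x \<partial>count_space UNIV)"
  proof (rule nn_integral_mono)
    fix x :: int
    show "h x * indicator {x::int. \<bar>real_of_int x\<bar> > R} x \<le> h x * indicator (int ` P) x + h x * indicator ((\<lambda>n. - int n) ` P) x"
    proof (cases "\<bar>real_of_int x\<bar> > R")
      case True
      show ?thesis
      proof (cases "x \<ge> 0")
        case True
        hence "x \<in> int ` P" using \<open>\<bar>real_of_int x\<bar> > R\<close> unfolding P_def
          by (intro image_eqI[of _ _ "nat x"]) auto
        thus ?thesis using \<open>\<bar>real_of_int x\<bar> > R\<close> by simp
      next
        case False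
        hence "x \<in> (\<lambda>n. - int n) ` P" using \<open>\<bar>real_of_int x\<bar> > R\<close> unfolding P_def
          by (intro image_eqI[of _ _ "nat (-x)"]) auto
        thus ?thesis using \<open>\<bar>real_of_int x\<bar> > R\<close> by simp
      qed
    qed simp
  qed
  also have "\<dots> = (\<integral>\<^sup>+x. h x * indicator (int ` P) x \<partial>count_space UNIV) + (\<integral>\<^sup>+x. h x * indicator ((\<lambda>n. - int n) ` P) x \<partial>count_space UNIV)"
    by (rule nn_integral_add) auto
  also have "\<dots> \<le> ennreal B + ennreal B"
    by (intro add_mono part) (auto simp: h_def inj_def)
  also have "\<dots> = ennreal (2 * B)" using B0 by (simp flip: ennreal_plus)
  finally show ?thesis by (simp add: h_def B_def)
qed

lemma cos_avg:
  fixes u y :: real assumes u: "u > 0" and y: "1 / u \<le> \<bar>y\<bar>"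
  shows "ennreal (u / 2) \<le> (\<integral>\<^sup>+t. ennreal (indicator {0..u} t * (1 - cos (2 * pi * t * y))) \<partial>lborel)"
proof -
  have y0: "y \<noteq> 0" using u y by (auto simp: divide_simps split: if_splits)
  define F where "F t = t - sin (2 * pi * t * y) / (2 * pi * y)" for t
  have der: "(F has_vector_derivative (1 - cos (2 * pi * t * y))) (at t within {0..u})" for t
  proof -
    have "(F has_real_derivative (1 - cos (2 * pi * t * y) * (2 * pi * y) / (2 * pi * y))) (at t within {0..u})"
      unfolding F_def by (auto intro!: derivative_eq_intros)
    hence "(F has_real_derivative (1 - cos (2 * pi * t * y))) (at t within {0..u})" using y0 by simp
    thus ?thesis by (simp add: has_real_derivative_iff_has_vector_derivative)
  qed
  have I: "((\<lambda>t. 1 - cos (2 * pi * t * y)) has_integral (F u - F 0)) {0..u}"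
    using u der by (intro fundamental_theorem_of_calculus) auto
  have "(\<integral>\<^sup>+t. ennreal (indicator {0..u} t * (1 - cos (2 * pi * t * y))) \<partial>lborel) = ennreal (F u - F 0)"
    by (rule nn_integral_has_integral_lebesgue[OF _ I]) auto
  moreover have "u / 2 \<le> F u - F 0"
  proof -
    have "\<bar>sin (2 * pi * u * y) / (2 * pi * y)\<bar> \<le> 1 / (2 * pi * \<bar>y\<bar>)"
      using y0 by (simp add: abs_divide abs_mult divide_right_mono)
    also have "\<dots> \<le> u / (2 * pi)"
      using y u y0 by (simp add: divide_simps) (simp add: mult.commute)
    also have "\<dots> \<le> u / 2" using u pi_gt3 by (intro divide_left_mono) auto
    finally have "\<bar>sin (2 * pi * u * y) / (2 * pi * y)\<bar> \<le> u / 2" .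
    moreover have "F u - F 0 = u - sin (2 * pi * u * y) / (2 * pi * y)" by (simp add: F_def)
    ultimately show ?thesis by linarith
  qed
  ultimately show ?thesis by (simp add: ennreal_leI)
qed

lemma trunc_ineq:
  fixes X :: "'a \<Rightarrow> real"
  assumes P: "prob_space M" and X[measurable]: "X \<in> borel_measurable M" and u: "u > 0"
    and bnd: "\<And>t. 0 \<le> t \<Longrightarrow> t \<le> u \<Longrightarrow> (\<integral>\<omega>. 1 - cos (2 * pi * t * X \<omega>) \<partial>M) \<le> D"
  shows "measure M {\<omega>\<in>space M. 1 / u \<le> \<bar>X \<omega>\<bar>} \<le> 2 * D"
proof -
  interpret M: prob_space M by (rule P)
  interpret L: pair_sigma_finite lborel M ..
  define Q where "Q = {\<omega>\<in>space M. 1 / u \<le> \<bar>X \<omega>\<bar>}"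
  have Qs[measurable]: "Q \<in> sets M" unfolding Q_def by measurable
  have D0: "0 \<le> D" using bnd[of 0] u by simp
  have intg: "integrable M (\<lambda>\<omega>. 1 - cos (2 * pi * t * X \<omega>))" for t
  proof (rule M.integrable_const_bound[where B=2])
    have "norm (1 - cos x) \<le> 2" for x :: real using cos_ge_minus_one[of x] cos_le_one[of x] by (simp add: abs_le_iff)
    thus "AE \<omega> in M. norm (1 - cos (2 * pi * t * X \<omega>)) \<le> 2" by simp
  qed measurable
  have "ennreal (u / 2) * emeasure M Q = (\<integral>\<^sup>+\<omega>. ennreal (u / 2) * indicator Q \<omega> \<partial>M)"
    by (simp add: nn_integral_cmult_indicator)
  also have "\<dots> \<le> (\<integral>\<^sup>+\<omega>. (\<integral>\<^sup>+t. ennreal (indicator {0..u} t * (1 - cos (2 * pi * t * X \<omega>))) \<partial>lborel) \<partial>M)"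
  proof (rule nn_integral_mono)
    fix \<omega> assume "\<omega> \<in> space M"
    show "ennreal (u / 2) * indicator Q \<omega> \<le> (\<integral>\<^sup>+t. ennreal (indicator {0..u} t * (1 - cos (2 * pi * t * X \<omega>))) \<partial>lborel)"
    proof (cases "\<omega> \<in> Q")
      case True
      then show ?thesis using cos_avg[OF u, of "X \<omega>"] by (simp add: Q_def)
    qed simp
  qed
  also have "\<dots> = (\<integral>\<^sup>+t. (\<integral>\<^sup>+\<omega>. ennreal (indicator {0..u} t * (1 - cos (2 * pi * t * X \<omega>))) \<partial>M) \<partial>lborel)"
    by (rule L.Fubini') measurable
  also have "\<dots> \<le> (\<integral>\<^sup>+t. ennreal D * indicator {0..u} t \<partial>lborel)"
  proof (rule nn_integral_mono)
    fix t :: real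
    show "(\<integral>\<^sup>+\<omega>. ennreal (indicator {0..u} t * (1 - cos (2 * pi * t * X \<omega>))) \<partial>M) \<le> ennreal D * indicator {0..u} t"
    proof (cases "t \<in> {0..u}")
      case True
      have "(\<integral>\<^sup>+\<omega>. ennreal (indicator {0..u} t * (1 - cos (2 * pi * t * X \<omega>))) \<partial>M)
          = (\<integral>\<^sup>+\<omega>. ennreal (1 - cos (2 * pi * t * X \<omega>)) \<partial>M)" using True by simp
      also have "\<dots> = ennreal (\<integral>\<omega>. 1 - cos (2 * pi * t * X \<omega>) \<partial>M)"
        by (rule nn_integral_eq_integral[OF intg]) auto
      also have "\<dots> \<le> ennreal D" using bnd True by (intro ennreal_leI) auto
      finally show ?thesis using True by simp
    qed simp
  qed
  also have "\<dots> = ennreal D * ennreal u" using u by (simp add: nn_integral_cmult_indicator)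
  finally have fin: "ennreal (u / 2) * emeasure M Q \<le> ennreal D * ennreal u" .
  have e1: "ennreal (u / 2 * measure M Q) = ennreal (u / 2) * emeasure M Q"
    using u by (simp add: M.emeasure_eq_measure ennreal_mult[symmetric])
  have e2: "ennreal (D * u) = ennreal D * ennreal u" using u D0 by (simp add: ennreal_mult)
  have "ennreal (u / 2 * measure M Q) \<le> ennreal (D * u)"
    using fin by (simp only: e1 e2)
  hence "u / 2 * measure M Q \<le> D * u" using u D0 by (simp add: ennreal_le_iff)
  hence "measure M Q \<le> 2 * D" using u by (simp add: field_simps)
  thus ?thesis by (simp add: Q_def)
qed

lemma tail_bound:
  fixes X :: "'a \<Rightarrow> real"
  assumes P: "prob_space M" and X[measurable]: "X \<in> borel_measurable M" and a: "\<alpha> > 0" and c: "c > 0"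
    and asym: "(\<lambda>t. 1 - (\<integral>\<omega>. cis (2 * pi * t * X \<omega>) \<partial>M)) \<sim>[at 0] (\<lambda>t. complex_of_real (c * \<bar>t\<bar> powr \<alpha>))"
  shows "\<exists>A\<ge>0. \<forall>s>0. measure M {\<omega>\<in>space M. s \<le> \<bar>X \<omega>\<bar>} \<le> A * s powr (-\<alpha>)"
proof -
  interpret M: prob_space M by (rule P)
  have "(\<lambda>t. 1 - (\<integral>\<omega>. cis (2 * pi * t * X \<omega>) \<partial>M)) \<in> O[at 0](\<lambda>t. complex_of_real (c * \<bar>t\<bar> powr \<alpha>))"
    using asym by (rule asymp_equiv_imp_bigo)
  then obtain K where K: "K > 0"
    and ev: "eventually (\<lambda>t. norm (1 - (\<integral>\<omega>. cis (2 * pi * t * X \<omega>) \<partial>M)) \<le> K * norm (complex_of_real (c * \<bar>t\<bar> powr \<alpha>))) (at 0)"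
    by (rule landau_o.bigE)
  then obtain d where d: "d > 0"
    and dd: "\<And>t. t \<noteq> 0 \<Longrightarrow> dist t 0 < d \<Longrightarrow> norm (1 - (\<integral>\<omega>. cis (2 * pi * t * X \<omega>) \<partial>M)) \<le> K * norm (complex_of_real (c * \<bar>t\<bar> powr \<alpha>))"
    unfolding eventually_at by auto
  have intc: "integrable M (\<lambda>\<omega>. cis (2 * pi * t * X \<omega>))" for t
  proof (rule M.integrable_const_bound[where B=1])
    show "AE \<omega> in M. norm (cis (2 * pi * t * X \<omega>)) \<le> 1" by simp
    show "(\<lambda>\<omega>. cis (2 * pi * t * X \<omega>)) \<in> borel_measurable M" unfolding cis_conv_exp by measurable
  qed
  have intcos: "integrable M (\<lambda>\<omega>. cos (2 * pi * t * X \<omega>))" for t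
  proof (rule M.integrable_const_bound[where B=1])
    show "AE \<omega> in M. norm (cos (2 * pi * t * X \<omega>)) \<le> 1" by simp
  qed measurable
  have re: "(\<integral>\<omega>. 1 - cos (2 * pi * t * X \<omega>) \<partial>M) = Re (1 - (\<integral>\<omega>. cis (2 * pi * t * X \<omega>) \<partial>M))" for t
  proof -
    have "Re (\<integral>\<omega>. cis (2 * pi * t * X \<omega>) \<partial>M) = (\<integral>\<omega>. Re (cis (2 * pi * t * X \<omega>)) \<partial>M)"
      by (rule integral_bounded_linear[OF bounded_linear_Re intc, symmetric])
    also have "\<dots> = (\<integral>\<omega>. cos (2 * pi * t * X \<omega>) \<partial>M)" by simp
    finally have "Re (\<integral>\<omega>. cis (2 * pi * t * X \<omega>) \<partial>M) = (\<integral>\<omega>. cos (2 * pi * t * X \<omega>) \<partial>M)" .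
    moreover have "(\<integral>\<omega>. 1 - cos (2 * pi * t * X \<omega>) \<partial>M) = 1 - (\<integral>\<omega>. cos (2 * pi * t * X \<omega>) \<partial>M)"
      using intcos by (simp add: Bochner_Integration.integral_diff M.prob_space)
    ultimately show ?thesis by simp
  qed
  have small: "measure M {\<omega>\<in>space M. 1 / u \<le> \<bar>X \<omega>\<bar>} \<le> 2 * (K * c * u powr \<alpha>)" if u: "0 < u" "u < d" for u
  proof (rule trunc_ineq[OF P X \<open>0 < u\<close>])
    fix t :: real assume t: "0 \<le> t" "t \<le> u"
    show "(\<integral>\<omega>. 1 - cos (2 * pi * t * X \<omega>) \<partial>M) \<le> K * c * u powr \<alpha>"
    proof (cases "t = 0")
      case True then show ?thesis using K c by simp
    next
      case False
      have "(\<integral>\<omega>. 1 - cos (2 * pi * t * X \<omega>) \<partial>M) \<le> norm (1 - (\<integral>\<omega>. cis (2 * pi * t * X \<omega>) \<partial>M))"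
        unfolding re by (rule complex_Re_le_cmod)
      also have "\<dots> \<le> K * norm (complex_of_real (c * \<bar>t\<bar> powr \<alpha>))"
        using False t u by (intro dd) auto
      also have "\<dots> = K * c * t powr \<alpha>" using c t by (simp del: of_real_mult add: norm_of_real)
      also have "\<dots> \<le> K * c * u powr \<alpha>" using K c t a by (intro mult_left_mono powr_mono2) auto
      finally show ?thesis .
    qed
  qed
  define A where "A = 2 * K * c + (2 / d) powr \<alpha>"
  have A0: "A \<ge> 0" using K c by (simp add: A_def)
  have "measure M {\<omega>\<in>space M. s \<le> \<bar>X \<omega>\<bar>} \<le> A * s powr (-\<alpha>)" if s: "s > 0" for s
  proof (cases "s > 2 / d")
    case True
    hence u: "0 < 1 / s" "1 / s < d" using s d by (auto simp: field_simps)
    have "measure M {\<omega>\<in>space M. s \<le> \<bar>X \<omega>\<bar>} \<le> 2 * (K * c * (1 / s) powr \<alpha>)"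
      using small[OF u] by simp
    also have "(1 / s) powr \<alpha> = s powr (-\<alpha>)" using s by (simp add: powr_minus_divide powr_divide)
    also have "2 * (K * c * s powr (-\<alpha>)) \<le> A * s powr (-\<alpha>)"
      unfolding A_def by (simp add: distrib_right)
    finally show ?thesis .
  next
    case False
    have "measure M {\<omega>\<in>space M. s \<le> \<bar>X \<omega>\<bar>} \<le> 1" by (rule M.prob_le_1)
    also have "1 \<le> (2 / (d * s)) powr \<alpha>"
      using False s d a by (intro ge_one_powr_ge_zero) (auto simp: field_simps)
    also have "(2 / (d * s)) powr \<alpha> = (2 / d) powr \<alpha> * s powr (-\<alpha>)"
      using s d by (simp add: powr_divide powr_mult powr_minus divide_simps)
    also have "\<dots> \<le> A * s powr (-\<alpha>)"
      unfolding A_def using K c by (intro mult_right_mono) auto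
    finally show ?thesis .
  qed
  thus ?thesis using A0 by blast
qed

lemma pointwise_bound:
  fixes f :: "real \<Rightarrow> complex" and m :: nat
  assumes B0: "\<And>y. norm (f y) \<le> B0" and Bm: "\<And>y. \<bar>y\<bar> ^ m * norm (f y) \<le> Bm"
    and r: "r > 0" and z: "z \<noteq> 0"
  shows "norm (f ((z + e) / r)) \<le> Bm * (2 * r) ^ m * \<bar>z\<bar> powr (- real m) + B0 * indicator {e. \<bar>z\<bar> / 2 \<le> \<bar>e\<bar>} e"
proof -
  have "0 \<le> \<bar>0::real\<bar> ^ m * norm (f 0)" by simp
  hence Bm0: "0 \<le> Bm" using Bm[of 0] by linarith
  have zp: "\<bar>z\<bar> > 0" using z by simp
  show ?thesis
  proof (cases "\<bar>z\<bar> / 2 \<le> \<bar>e\<bar>")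
    case True
    have "0 \<le> Bm * (2 * r) ^ m * \<bar>z\<bar> powr (- real m)" using Bm0 r by simp
    thus ?thesis using True B0[of "(z + e) / r"] by simp
  next
    case False
    define y where "y = (z + e) / r"
    have "\<bar>z + e\<bar> \<ge> \<bar>z\<bar> / 2" using False by linarith
    hence yb: "\<bar>y\<bar> \<ge> \<bar>z\<bar> / (2 * r)" using r by (simp add: y_def abs_divide divide_simps)
    have zq: "\<bar>z\<bar> / (2 * r) > 0" using zp r by simp
    hence ypos: "\<bar>y\<bar> > 0" using yb by linarith
    have "norm (f y) \<le> Bm / \<bar>y\<bar> ^ m"
      using Bm[of y] ypos by (simp add: pos_le_divide_eq mult.commute)
    also have "\<dots> \<le> Bm / (\<bar>z\<bar> / (2 * r)) ^ m"
    proof -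
      have p1: "(\<bar>z\<bar> / (2 * r)) ^ m \<le> \<bar>y\<bar> ^ m" by (rule power_mono) (use yb zq in auto)
      have p2: "0 < (\<bar>z\<bar> / (2 * r)) ^ m * \<bar>y\<bar> ^ m" using zq ypos by simp
      show ?thesis by (rule divide_left_mono[OF p1 Bm0]) (use p2 in \<open>simp add: mult.commute\<close>)
    qed
    also have "\<dots> = Bm * (2 * r) ^ m * \<bar>z\<bar> powr (- real m)"
      using zp r by (simp add: powr_minus_divide powr_realpow power_divide)
    finally show ?thesis using False by (simp add: y_def)
  qed
qed


lemma expect_bound:
  fixes f :: "real \<Rightarrow> complex" and m :: nat and Y :: "'a \<Rightarrow> real"
  assumes P: "prob_space M" and Y[measurable]: "Y \<in> borel_measurable M"
    and B0: "\<And>y. norm (f y) \<le> B0" and Bm: "\<And>y. \<bar>y\<bar> ^ m * norm (f y) \<le> Bm"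
    and r: "r > 0" and z: "z \<noteq> 0"
    and tail: "measure M {\<omega>\<in>space M. \<bar>z\<bar> / 2 \<le> \<bar>Y \<omega>\<bar>} \<le> T"
  shows "(\<integral>\<^sup>+\<omega>. ennreal (norm (f ((z + Y \<omega>) / r))) \<partial>M)
           \<le> ennreal (Bm * (2 * r) ^ m * \<bar>z\<bar> powr (- real m) + B0 * T)"
proof -
  interpret M: prob_space M by (rule P)
  define a where "a = Bm * (2 * r) ^ m * \<bar>z\<bar> powr (- real m)"
  define S where "S = {\<omega>\<in>space M. \<bar>z\<bar> / 2 \<le> \<bar>Y \<omega>\<bar>}"
  have S[measurable]: "S \<in> sets M" unfolding S_def by measurable
  have "0 \<le> \<bar>0::real\<bar> ^ m * norm (f 0)" by simp
  hence Bm0: "0 \<le> Bm" using Bm[of 0] by linarith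
  have B00: "0 \<le> B0" using B0[of 0] norm_ge_zero[of "f 0"] by linarith
  have a0: "0 \<le> a" unfolding a_def using Bm0 r by simp
  have "(\<integral>\<^sup>+\<omega>. ennreal (norm (f ((z + Y \<omega>) / r))) \<partial>M) \<le> (\<integral>\<^sup>+\<omega>. ennreal a + ennreal B0 * indicator S \<omega> \<partial>M)"
  proof (rule nn_integral_mono)
    fix \<omega> assume \<omega>: "\<omega> \<in> space M"
    have "norm (f ((z + Y \<omega>) / r)) \<le> a + B0 * indicator {e. \<bar>z\<bar> / 2 \<le> \<bar>e\<bar>} (Y \<omega>)"
      unfolding a_def by (rule pointwise_bound[OF B0 Bm r z])
    also have "indicator {e. \<bar>z\<bar> / 2 \<le> \<bar>e\<bar>} (Y \<omega>) = (indicator S \<omega> :: real)"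
      using \<omega> by (simp add: S_def indicator_def)
    finally have "ennreal (norm (f ((z + Y \<omega>) / r))) \<le> ennreal (a + B0 * indicator S \<omega>)"
      by (rule ennreal_leI)
    also have "\<dots> = ennreal a + ennreal B0 * indicator S \<omega>"
      using a0 B00 by (simp add: indicator_def ennreal_plus)
    finally show "ennreal (norm (f ((z + Y \<omega>) / r))) \<le> ennreal a + ennreal B0 * indicator S \<omega>" .
  qed
  also have "\<dots> = ennreal a + ennreal B0 * emeasure M S"
    by (subst nn_integral_add) (auto simp: nn_integral_cmult_indicator M.emeasure_space_1)
  also have "\<dots> \<le> ennreal a + ennreal B0 * ennreal T"
    using tail by (intro add_left_mono mult_left_mono) (auto simp: M.emeasure_eq_measure S_def intro!: ennreal_leI)
  also have "\<dots> = ennreal (a + B0 * T)"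
  proof -
    have T0: "0 \<le> T" using tail measure_nonneg order_trans by blast
    thus ?thesis using a0 B00 by (simp add: ennreal_plus ennreal_mult)
  qed
  finally show ?thesis unfolding a_def .
qed

lemma ennreal_lin: "0 \<le> p \<Longrightarrow> 0 \<le> u \<Longrightarrow> 0 \<le> q \<Longrightarrow> 0 \<le> v \<Longrightarrow>
  ennreal (p * u + q * v) = ennreal p * ennreal u + ennreal q * ennreal v"
  by (simp add: ennreal_mult)


theorem lemma4p6:
  fixes M :: "'a measure" and \<xi> :: "int \<Rightarrow> 'a \<Rightarrow> real" and f :: "real \<Rightarrow> complex"
    and c \<alpha> \<beta> \<gamma> :: real
  assumes "prob_space M"
    and "schwartz f"
    and "\<And>x. \<xi> x \<in> borel_measurable M"
    and "prob_space.indep_vars M (\<lambda>_. borel) \<xi> UNIV"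
    and "\<And>x. distr M borel (\<xi> x) = distr M borel (\<xi> 0)"
    and "c > 0" and "1 < \<alpha>" and "\<alpha> \<le> 2"
    and "(\<lambda>t. 1 - (\<integral>\<omega>. cis (2 * pi * t * \<xi> 0 \<omega>) \<partial>M))
           \<sim>[at 0] (\<lambda>t. complex_of_real (c * \<bar>t\<bar> powr \<alpha>))"
    and "\<gamma> > 1" and "1 < \<beta>" and "\<beta> < \<alpha>"
  shows "\<exists>C::real. \<forall>r::real. r > 0 \<longrightarrow> r powr \<gamma> > 2 \<longrightarrow>
           ennreal (r powr ((\<alpha> - 1) / \<alpha>)) *
             (\<integral>\<^sup>+ \<omega>. ennreal (norm (infsum (\<lambda>x::int. f ((real_of_int x + \<xi> x \<omega>) / r))
                                       {x. \<bar>real_of_int x\<bar> > r powr \<gamma>})) \<partial>M)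
           \<le> ennreal (C * r powr ((\<alpha> - 1) / \<alpha>) / r powr (\<gamma> * (\<beta> - 1)))"
proof -
  interpret M: prob_space M by (rule assms(1))
  note xi_meas[measurable] = assms(3)
  have sch1: "\<And>k x. ((vderiv ^^ k) f) differentiable (at x)"
    and sch2: "\<And>m k. \<exists>B. \<forall>x. \<bar>x\<bar> ^ m * norm (((vderiv ^^ k) f) x) \<le> B"
    using assms(2) unfolding schwartz_def by auto
  have fdiff: "f differentiable (at x)" for x using sch1[of 0 x] by simp
  have fcont: "continuous_on UNIV f"
    using fdiff by (intro continuous_at_imp_continuous_on) (auto intro: differentiable_imp_continuous_within)
  have fmeas[measurable]: "f \<in> borel_measurable borel" by (rule borel_measurable_continuous_onI[OF fcont])
  obtain B0 where B0': "\<forall>y. \<bar>y\<bar> ^ 0 * norm (((vderiv ^^ 0) f) y) \<le> B0" using sch2[of 0 0] by blast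
  hence B0: "\<And>y. norm (f y) \<le> B0" by simp
  define m where "m = nat \<lceil>\<gamma> * \<beta> / (\<gamma> - 1)\<rceil> + 2"
  obtain Bm where Bm': "\<forall>y. \<bar>y\<bar> ^ m * norm (((vderiv ^^ 0) f) y) \<le> Bm" using sch2[of m 0] by blast
  hence Bm: "\<And>y. \<bar>y\<bar> ^ m * norm (f y) \<le> Bm" by simp
  have "0 \<le> \<bar>0::real\<bar> ^ m * norm (f 0)" by simp
  hence Bm0: "0 \<le> Bm" using Bm[of 0] by linarith
  have B00: "0 \<le> B0" using B0[of 0] norm_ge_zero[of "f 0"] by linarith
  have a0: "\<alpha> > 0" using assms(7) by simp
  obtain A where A0: "A \<ge> 0" and A: "\<And>s. s > 0 \<Longrightarrow> measure M {\<omega>\<in>space M. s \<le> \<bar>\<xi> 0 \<omega>\<bar>} \<le> A * s powr (-\<alpha>)"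
    using tail_bound[OF assms(1) assms(3)[of 0] a0 assms(6) assms(9)] by blast
  have tailx: "measure M {\<omega>\<in>space M. s \<le> \<bar>\<xi> x \<omega>\<bar>} \<le> A * s powr (-\<alpha>)" if s: "s > 0" for x s
  proof -
    have Sb: "{y::real. s \<le> \<bar>y\<bar>} \<in> sets borel" by measurable
    have "measure M {\<omega>\<in>space M. s \<le> \<bar>\<xi> x \<omega>\<bar>} = measure (distr M borel (\<xi> x)) {y. s \<le> \<bar>y\<bar>}"
      by (subst measure_distr[OF _ Sb]) (auto intro!: arg_cong[where f="measure M"])
    also have "\<dots> = measure (distr M borel (\<xi> 0)) {y. s \<le> \<bar>y\<bar>}" by (simp add: assms(5)[of x])
    also have "\<dots> = measure M {\<omega>\<in>space M. s \<le> \<bar>\<xi> 0 \<omega>\<bar>}"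
      by (subst measure_distr[OF _ Sb]) (auto intro!: arg_cong[where f="measure M"])
    finally show ?thesis using A[OF s] by simp
  qed
  have m_ge: "real m \<ge> \<gamma> * \<beta> / (\<gamma> - 1)" unfolding m_def by linarith
  have m1: "real m > 1" unfolding m_def by simp
  have m_key: "real m * (\<gamma> - 1) \<ge> \<gamma> * \<beta>" using m_ge assms(10) by (simp add: pos_divide_le_eq)
  define Sm where "Sm = 2 * (2 powr (real m - 1) / (real m - 1))"
  define Sa where "Sa = 2 * (2 powr (\<alpha> - 1) / (\<alpha> - 1))"
  define Q where "Q = B0 * A * 2 powr \<alpha>"
  define C where "C = Bm * 2 ^ m * Sm + Q * Sa"
  have Sm0: "Sm \<ge> 0" using m1 by (simp add: Sm_def)
  have Sa0: "Sa \<ge> 0" using assms(7) by (simp add: Sa_def)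
  have Q0: "Q \<ge> 0" using B00 A0 by (simp add: Q_def)
  have C0: "C \<ge> 0" using Bm0 Sm0 Q0 Sa0 by (simp add: C_def)
  show ?thesis
  proof (intro exI allI impI)
    fix r :: real assume r: "r > 0" and R2: "r powr \<gamma> > 2"
    define R where "R = r powr \<gamma>"
    have R: "R \<ge> 2" using R2 by (simp add: R_def)
    have r1: "r \<ge> 1"
    proof (rule ccontr)
      assume "\<not> r \<ge> 1"
      hence "r powr \<gamma> \<le> 1" using r assms(10) by (intro powr_le1) auto
      thus False using R2 by simp
    qed
    define I where "I = {x::int. \<bar>real_of_int x\<bar> > R}"
    have E: "(\<integral>\<^sup>+ \<omega>. ennreal (norm (infsum (\<lambda>x::int. f ((real_of_int x + \<xi> x \<omega>) / r)) I)) \<partial>M)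
             \<le> ennreal (C * R powr (1 - \<beta>))"
    proof -
      have "(\<integral>\<^sup>+ \<omega>. ennreal (norm (infsum (\<lambda>x::int. f ((real_of_int x + \<xi> x \<omega>) / r)) I)) \<partial>M)
          \<le> (\<integral>\<^sup>+ \<omega>. (\<integral>\<^sup>+x. ennreal (norm (f ((real_of_int x + \<xi> x \<omega>) / r))) \<partial>count_space I) \<partial>M)"
        by (intro nn_integral_mono norm_infsum_le_nn)
      also have "\<dots> = (\<integral>\<^sup>+x. (\<integral>\<^sup>+ \<omega>. ennreal (norm (f ((real_of_int x + \<xi> x \<omega>) / r))) \<partial>M) \<partial>count_space I)"
        by (rule nn_integral_count_space_nn_integral) auto
      also have "\<dots> \<le> (\<integral>\<^sup>+x. ennreal (Bm * (2 * r) ^ m) * ennreal (\<bar>real_of_int x\<bar> powr (- real m))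
                          + ennreal Q * ennreal (\<bar>real_of_int x\<bar> powr (- \<alpha>)) \<partial>count_space I)"
      proof (rule nn_integral_mono)
        fix x assume "x \<in> space (count_space I)"
        hence xI: "\<bar>real_of_int x\<bar> > R" by (simp add: I_def)
        hence z: "real_of_int x \<noteq> 0" using R by auto
        have zp: "\<bar>real_of_int x\<bar> / 2 > 0" using z by simp
        have "(\<integral>\<^sup>+ \<omega>. ennreal (norm (f ((real_of_int x + \<xi> x \<omega>) / r))) \<partial>M)
            \<le> ennreal (Bm * (2 * r) ^ m * \<bar>real_of_int x\<bar> powr (- real m) + B0 * (A * (\<bar>real_of_int x\<bar> / 2) powr (-\<alpha>)))"
          by (rule expect_bound[OF assms(1) assms(3) B0 Bm r z tailx[OF zp]])
        also have "(\<bar>real_of_int x\<bar> / 2) powr (-\<alpha>) = 2 powr \<alpha> * \<bar>real_of_int x\<bar> powr (-\<alpha>)"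
          using z by (simp add: powr_divide powr_minus divide_simps)
        also have "ennreal (Bm * (2 * r) ^ m * \<bar>real_of_int x\<bar> powr (- real m) + B0 * (A * (2 powr \<alpha> * \<bar>real_of_int x\<bar> powr (-\<alpha>))))
            = ennreal (Bm * (2 * r) ^ m) * ennreal (\<bar>real_of_int x\<bar> powr (- real m))
              + ennreal Q * ennreal (\<bar>real_of_int x\<bar> powr (- \<alpha>))"
        proof -
          have "B0 * (A * (2 powr \<alpha> * \<bar>real_of_int x\<bar> powr (-\<alpha>))) = Q * \<bar>real_of_int x\<bar> powr (-\<alpha>)"
            by (simp add: Q_def)
          hence eqQ: "Bm * (2 * r) ^ m * \<bar>real_of_int x\<bar> powr (- real m) + B0 * (A * (2 powr \<alpha> * \<bar>real_of_int x\<bar> powr (-\<alpha>)))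
              = Bm * (2 * r) ^ m * \<bar>real_of_int x\<bar> powr (- real m) + Q * \<bar>real_of_int x\<bar> powr (-\<alpha>)" by simp
          show ?thesis unfolding eqQ by (rule ennreal_lin) (use Bm0 r Q0 in auto)
        qed
        finally show "(\<integral>\<^sup>+ \<omega>. ennreal (norm (f ((real_of_int x + \<xi> x \<omega>) / r))) \<partial>M)
            \<le> ennreal (Bm * (2 * r) ^ m) * ennreal (\<bar>real_of_int x\<bar> powr (- real m))
              + ennreal Q * ennreal (\<bar>real_of_int x\<bar> powr (- \<alpha>))" .
      qed
      also have "\<dots> = ennreal (Bm * (2 * r) ^ m) * (\<integral>\<^sup>+x. ennreal (\<bar>real_of_int x\<bar> powr (- real m)) \<partial>count_space I)
                    + ennreal Q * (\<integral>\<^sup>+x. ennreal (\<bar>real_of_int x\<bar> powr (- \<alpha>)) \<partial>count_space I)"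
        by (subst nn_integral_add) (auto simp: nn_integral_cmult)
      also have "\<dots> \<le> ennreal (Bm * (2 * r) ^ m) * ennreal (Sm * R powr (1 - real m))
                    + ennreal Q * ennreal (Sa * R powr (1 - \<alpha>))"
      proof -
        have ts1: "(\<integral>\<^sup>+x. ennreal (\<bar>real_of_int x\<bar> powr (- real m)) \<partial>count_space I) \<le> ennreal (Sm * R powr (1 - real m))"
          using int_tail_sum[OF m1 R] by (simp add: I_def Sm_def mult.assoc)
        have ts2: "(\<integral>\<^sup>+x. ennreal (\<bar>real_of_int x\<bar> powr (- \<alpha>)) \<partial>count_space I) \<le> ennreal (Sa * R powr (1 - \<alpha>))"
          using int_tail_sum[OF assms(7) R] by (simp add: I_def Sa_def mult.assoc)
        show ?thesis by (intro add_mono mult_left_mono ts1 ts2) auto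
      qed
      also have "\<dots> = ennreal (Bm * (2 * r) ^ m * (Sm * R powr (1 - real m)) + Q * (Sa * R powr (1 - \<alpha>)))"
        using Bm0 r Q0 Sm0 Sa0 by (intro ennreal_lin[symmetric]) auto
      also have "\<dots> \<le> ennreal (C * R powr (1 - \<beta>))"
      proof (rule ennreal_leI)
        have "r ^ m * R powr (1 - real m) = r powr (real m + \<gamma> * (1 - real m))"
          using r by (simp add: R_def powr_realpow[symmetric] powr_powr powr_add)
        also have "\<dots> \<le> r powr (\<gamma> * (1 - \<beta>))"
          using r1 m_key by (intro powr_mono) (auto simp: algebra_simps)
        also have "\<dots> = R powr (1 - \<beta>)" by (simp add: R_def powr_powr)
        finally have k1: "r ^ m * R powr (1 - real m) \<le> R powr (1 - \<beta>)" .
        have k2: "R powr (1 - \<alpha>) \<le> R powr (1 - \<beta>)" using R assms(12) by (intro powr_mono) auto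
        have "Bm * (2 * r) ^ m * (Sm * R powr (1 - real m)) = (Bm * 2 ^ m * Sm) * (r ^ m * R powr (1 - real m))"
          by (simp add: power_mult_distrib)
        also have "\<dots> \<le> (Bm * 2 ^ m * Sm) * R powr (1 - \<beta>)"
          using k1 Bm0 Sm0 by (intro mult_left_mono) auto
        finally have t1: "Bm * (2 * r) ^ m * (Sm * R powr (1 - real m)) \<le> (Bm * 2 ^ m * Sm) * R powr (1 - \<beta>)" .
        have t2: "Q * (Sa * R powr (1 - \<alpha>)) \<le> (Q * Sa) * R powr (1 - \<beta>)"
          using k2 Q0 Sa0 by (simp add: mult.assoc mult_left_mono)
        show "Bm * (2 * r) ^ m * (Sm * R powr (1 - real m)) + Q * (Sa * R powr (1 - \<alpha>)) \<le> C * R powr (1 - \<beta>)"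
          using t1 t2 unfolding C_def by (simp add: distrib_right)
      qed
      finally show ?thesis .
    qed
    have eq: "C * r powr ((\<alpha> - 1) / \<alpha>) / r powr (\<gamma> * (\<beta> - 1)) = r powr ((\<alpha> - 1) / \<alpha>) * (C * R powr (1 - \<beta>))"
    proof -
      have "R powr (1 - \<beta>) = 1 / r powr (\<gamma> * (\<beta> - 1))"
        using r by (simp add: R_def powr_powr powr_minus_divide[symmetric] algebra_simps)
      thus ?thesis by simp
    qed
    have "ennreal (r powr ((\<alpha> - 1) / \<alpha>)) *
             (\<integral>\<^sup>+ \<omega>. ennreal (norm (infsum (\<lambda>x::int. f ((real_of_int x + \<xi> x \<omega>) / r)) I)) \<partial>M)
          \<le> ennreal (r powr ((\<alpha> - 1) / \<alpha>)) * ennreal (C * R powr (1 - \<beta>))"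
      by (rule mult_left_mono[OF E]) simp
    also have "\<dots> = ennreal (C * r powr ((\<alpha> - 1) / \<alpha>) / r powr (\<gamma> * (\<beta> - 1)))"
      unfolding eq using C0 by (simp add: ennreal_mult)
    finally show "ennreal (r powr ((\<alpha> - 1) / \<alpha>)) *
             (\<integral>\<^sup>+ \<omega>. ennreal (norm (infsum (\<lambda>x::int. f ((real_of_int x + \<xi> x \<omega>) / r))
                                       {x. \<bar>real_of_int x\<bar> > r powr \<gamma>})) \<partial>M)
           \<le> ennreal (C * r powr ((\<alpha> - 1) / \<alpha>) / r powr (\<gamma> * (\<beta> - 1)))"
      by (simp add: I_def R_def)
  qed
qed

end
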